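(* Let $A$ be a commutative $\mathbb F_p$-algebra ($p$ a prime), let $B=A[z_1,\ldots,z_n]$ be the polynomial ring in $n$ variables over $A$, and let $a_1,\ldots,a_n\in A$ be a regular sequence in $A$. Let $\mathcal D:B^n\to B$ be the $A$-linear map $\mathcal D(h_1,\ldots,h_n)=\sum_{i=1}^n(\partial_{z_i}h_i-a_ih_i)$. Then the image $\mathrm{Im}\,\mathcal D$ is a Mathieu subspace of $B$ (viewing $B$ as an $\mathbb F_p$-algebra).
   Context: Let $k$ be a field and $R$ a commutative $k$-algebra. A $k$-vector subspace $\mathcal M\subseteq R$ is called a Mathieu subspace of $R$ if for every $f\in R$ the following holds: if $f^m\in\mathcal M$ for all $m\ge 1$, then for every $g\in R$ one has $f^mg\in\mathcal M$ for all sufficiently large $m$. $\partial_{z_i}$ denotes the formal partial derivative with respect to $z_i$ on $B$ (which is $A$-linear). *)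

theory Defs
  imports "HOL-Library.Poly_Mapping" "HOL-Computational_Algebra.Primes"
begin

text \<open>Polynomials over 'a in the variables z_0, z_1, ... (indexed by nat):
  a polynomial maps exponent vectors (nat =>0 nat) to coefficients.\<close>
type_synonym 'a mpoly = "(nat \<Rightarrow>\<^sub>0 nat) \<Rightarrow>\<^sub>0 'a"

definition poly_ring :: "nat \<Rightarrow> 'a::comm_ring_1 mpoly set" where
  "poly_ring n = {f. \<forall>m\<in>Poly_Mapping.keys f. Poly_Mapping.keys m \<subseteq> {..<n}}"

definition const_poly :: "'a::comm_ring_1 \<Rightarrow> 'a mpoly" where
  "const_poly c = Poly_Mapping.single 0 c"

definition pdiff :: "nat \<Rightarrow> 'a::comm_ring_1 mpoly \<Rightarrow> 'a mpoly" where
  "pdiff i f = (\<Sum>m\<in>Poly_Mapping.keys f.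
      Poly_Mapping.single (m - Poly_Mapping.single i 1)
        (of_nat (Poly_Mapping.lookup m i) * Poly_Mapping.lookup f m))"

definition gen_ideal :: "(nat \<Rightarrow> 'a::comm_ring_1) \<Rightarrow> nat \<Rightarrow> 'a set" where
  "gen_ideal a k = {x. \<exists>r. x = (\<Sum>j<k. r j * a j)}"

definition regular_sequence :: "nat \<Rightarrow> (nat \<Rightarrow> 'a::comm_ring_1) \<Rightarrow> bool" where
  "regular_sequence n a \<longleftrightarrow>
     (\<forall>i<n. \<forall>x. x * a i \<in> gen_ideal a i \<longrightarrow> x \<in> gen_ideal a i) \<and>
     (1::'a) \<notin> gen_ideal a n"

text \<open>Mathieu subspace M of the commutative F_p-algebra R (given as a carrier set):
  M is an F_p-subspace (= additive subgroup) of R, and whenever f in R has all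
  powers f^m (m >= 1) in M, then for every g in R, f^m g is in M for all large m.\<close>
definition mathieu_subspace :: "'r::comm_ring_1 set \<Rightarrow> 'r set \<Rightarrow> bool" where
  "mathieu_subspace R M \<longleftrightarrow>
     M \<subseteq> R \<and> 0 \<in> M \<and> (\<forall>x\<in>M. \<forall>y\<in>M. x + y \<in> M) \<and> (\<forall>x\<in>M. - x \<in> M) \<and>
     (\<forall>f\<in>R. (\<forall>m\<ge>1. f ^ m \<in> M) \<longrightarrow>
        (\<forall>g\<in>R. \<exists>N. \<forall>m\<ge>N. f ^ m * g \<in> M))"

definition image_D :: "nat \<Rightarrow> (nat \<Rightarrow> 'a::comm_ring_1) \<Rightarrow> 'a mpoly set" where
  "image_D n a = {(\<Sum>i<n. pdiff i (h i) - const_poly (a i) * h i) | h.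
                    \<forall>i<n. h i \<in> poly_ring n}"

end

theory Submission
  imports Defs
begin


definition lin :: "('a::comm_ring_1 mpoly \<Rightarrow> 'a mpoly) \<Rightarrow> bool" where
  "lin F \<longleftrightarrow> (\<forall>x y. F (x + y) = F x + F y)"

lemma pm_decomp: "(\<Sum>k\<in>Poly_Mapping.keys f. Poly_Mapping.single k (Poly_Mapping.lookup f k)) = (f :: 'b \<Rightarrow>\<^sub>0 'c::comm_monoid_add)"
proof (rule poly_mapping_eqI)
  fix k'
  show "Poly_Mapping.lookup (\<Sum>k\<in>Poly_Mapping.keys f. Poly_Mapping.single k (Poly_Mapping.lookup f k)) k' = Poly_Mapping.lookup f k'"
    by (simp add: lookup_sum lookup_single when_def in_keys_iff)
qed

lemma lin_0: "lin F \<Longrightarrow> F 0 = 0"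
  unfolding lin_def by (metis add_cancel_right_right add_0)

lemma lin_sum: "lin F \<Longrightarrow> F (sum g S) = (\<Sum>s\<in>S. F (g s))"
  by (induction S rule: infinite_finite_induct) (auto simp: lin_0 lin_def)

lemma lin_neg: "lin F \<Longrightarrow> F (- x) = - F x"
  unfolding lin_def by (metis add.right_inverse eq_neg_iff_add_eq_0 lin_0 lin_def)

lemma lin_diff: "lin F \<Longrightarrow> F (x - y) = F x - F y"
  using lin_neg[of F y] unfolding lin_def by (metis diff_conv_add_uminus)

lemma lin_expand: "lin F \<Longrightarrow> F f = (\<Sum>k\<in>Poly_Mapping.keys f. F (Poly_Mapping.single k (Poly_Mapping.lookup f k)))"
  using lin_sum[of F "\<lambda>k. Poly_Mapping.single k (Poly_Mapping.lookup f k)" "Poly_Mapping.keys f"]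
  by (simp add: pm_decomp)

lemma lin_eqI: "lin F \<Longrightarrow> lin G \<Longrightarrow> (\<And>k c. F (Poly_Mapping.single k c) = G (Poly_Mapping.single k c)) \<Longrightarrow> F f = G f"
  using lin_expand[of F f] lin_expand[of G f] by simp

lemma lin_comp: "lin F \<Longrightarrow> lin G \<Longrightarrow> lin (F \<circ> G)"
  unfolding lin_def by simp

lemma lin_pdiff: "lin (pdiff i)"
  unfolding lin_def pdiff_def
  by (intro allI setsum_keys_plus_distrib) (auto simp: single_add distrib_left lookup_add)

lemma pdiff_single: "pdiff i (Poly_Mapping.single m c) = Poly_Mapping.single (m - Poly_Mapping.single i 1) (of_nat (Poly_Mapping.lookup m i) * c)"
  by (simp add: pdiff_def)

lemma const_mult_single: "const_poly a * Poly_Mapping.single m c = Poly_Mapping.single m (a * c)"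
  by (simp add: const_poly_def mult_single)

lemma lin_const: "lin (\<lambda>x. const_poly a * x)"
  unfolding lin_def by (simp add: distrib_left)



definition is_ideal :: "'a::comm_ring_1 set \<Rightarrow> bool" where
  "is_ideal L \<longleftrightarrow> 0 \<in> L \<and> (\<forall>x\<in>L. \<forall>y\<in>L. x + y \<in> L) \<and> (\<forall>x\<in>L. \<forall>r. r * x \<in> L)"

definition genI :: "'a::comm_ring_1 set \<Rightarrow> (nat \<Rightarrow> 'a) \<Rightarrow> nat \<Rightarrow> 'a set" where
  "genI L y k = {x. \<exists>r. x - (\<Sum>i<k. r i * y i) \<in> L}"

definition plus1 :: "'a::comm_ring_1 set \<Rightarrow> 'a \<Rightarrow> 'a set" where
  "plus1 K z = {x. \<exists>s. x - s * z \<in> K}"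

definition nzd :: "'a::comm_ring_1 set \<Rightarrow> 'a \<Rightarrow> bool" where
  "nzd K b \<longleftrightarrow> (\<forall>u. b * u \<in> K \<longrightarrow> u \<in> K)"

definition regL :: "'a::comm_ring_1 set \<Rightarrow> (nat \<Rightarrow> 'a) \<Rightarrow> nat \<Rightarrow> bool" where
  "regL L y m \<longleftrightarrow> (\<forall>j<m. nzd (genI L y j) (y j))"

lemma ideal_add: "is_ideal L \<Longrightarrow> x \<in> L \<Longrightarrow> y \<in> L \<Longrightarrow> x + y \<in> L"
  by (simp add: is_ideal_def)
lemma ideal_mult: "is_ideal L \<Longrightarrow> x \<in> L \<Longrightarrow> r * x \<in> L"
  by (simp add: is_ideal_def)
lemma ideal_mult2: "is_ideal L \<Longrightarrow> x \<in> L \<Longrightarrow> x * r \<in> L"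
  using ideal_mult[of L x r] by (simp add: mult.commute)
lemma ideal_0: "is_ideal L \<Longrightarrow> 0 \<in> L"
  by (simp add: is_ideal_def)
lemma ideal_neg: "is_ideal L \<Longrightarrow> x \<in> L \<Longrightarrow> - x \<in> L"
  using ideal_mult[of L x "-1"] by simp
lemma ideal_diff: "is_ideal L \<Longrightarrow> x \<in> L \<Longrightarrow> y \<in> L \<Longrightarrow> x - y \<in> L"
  using ideal_add[of L x "-y"] ideal_neg[of L y] by simp
lemma ideal_sum: "is_ideal L \<Longrightarrow> (\<And>i. i \<in> S \<Longrightarrow> f i \<in> L) \<Longrightarrow> sum f S \<in> L"
  by (induction S rule: infinite_finite_induct) (auto simp: ideal_0 ideal_add)

lemma plus1_ideal: assumes "is_ideal K" shows "is_ideal (plus1 K z)"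
  unfolding is_ideal_def plus1_def
proof (intro conjI ballI allI; clarsimp)
  show "\<exists>s. - (s * z) \<in> K" by (rule exI[of _ 0]) (simp add: ideal_0 assms)
next
  fix x y s t assume "x - s * z \<in> K" "y - t * z \<in> K"
  then have "(x - s * z) + (y - t * z) \<in> K" by (simp add: ideal_add assms)
  then show "\<exists>u. x + y - u * z \<in> K" by (intro exI[of _ "s + t"]) (simp add: algebra_simps)
next
  fix x r s assume "x - s * z \<in> K"
  then have "r * (x - s * z) \<in> K" by (simp add: ideal_mult assms)
  then show "\<exists>u. r * x - u * z \<in> K" by (intro exI[of _ "r * s"]) (simp add: algebra_simps)
qed

lemma plus1_sub: "is_ideal K \<Longrightarrow> K \<subseteq> plus1 K z"
  unfolding plus1_def by (auto intro: exI[of _ 0])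
lemma plus1_mem: "is_ideal K \<Longrightarrow> s * z \<in> plus1 K z"
  unfolding plus1_def by (auto intro!: exI[of _ s] simp: ideal_0)

lemma genI_ideal: assumes "is_ideal L" shows "is_ideal (genI L y k)"
  unfolding is_ideal_def genI_def
proof (intro conjI ballI allI; clarsimp)
  show "\<exists>r. - (\<Sum>i<k. r i * y i) \<in> L" by (rule exI[of _ "\<lambda>_. 0"]) (simp add: ideal_0 assms)
next
  fix x x' r s assume "x - (\<Sum>i<k. r i * y i) \<in> L" "x' - (\<Sum>i<k. s i * y i) \<in> L"
  then have "(x - (\<Sum>i<k. r i * y i)) + (x' - (\<Sum>i<k. s i * y i)) \<in> L" by (simp add: ideal_add assms)
  then show "\<exists>u. x + x' - (\<Sum>i<k. u i * y i) \<in> L"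
    by (intro exI[of _ "\<lambda>i. r i + s i"]) (simp add: algebra_simps sum.distrib)
next
  fix x t r assume "x - (\<Sum>i<k. r i * y i) \<in> L"
  then have "t * (x - (\<Sum>i<k. r i * y i)) \<in> L" by (simp add: ideal_mult assms)
  then show "\<exists>u. t * x - (\<Sum>i<k. u i * y i) \<in> L"
    by (intro exI[of _ "\<lambda>i. t * r i"]) (simp add: algebra_simps sum_distrib_left)
qed

lemma genI_0: "is_ideal L \<Longrightarrow> genI L y 0 = L"
  unfolding genI_def by auto

lemma genI_plus1: "genI (plus1 L z) w m = plus1 (genI L w m) z"
  unfolding genI_def plus1_def by (auto simp: algebra_simps)

lemma genI_mem: "x \<in> genI L y k \<longleftrightarrow> (\<exists>r. x - (\<Sum>i<k. r i * y i) \<in> L)"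
  by (simp add: genI_def)
lemma plus1_mem_iff: "x \<in> plus1 K z \<longleftrightarrow> (\<exists>s. x - s * z \<in> K)"
  by (simp add: plus1_def)

lemma genI_Suc_last: "genI L y (Suc m) = plus1 (genI L y m) (y m)"
proof (rule set_eqI, unfold genI_mem plus1_mem_iff, rule iffI)
  fix x assume "\<exists>r. x - (\<Sum>i<Suc m. r i * y i) \<in> L"
  then obtain r where "x - (\<Sum>i<Suc m. r i * y i) \<in> L" by blast
  then have "x - r m * y m - (\<Sum>i<m. r i * y i) \<in> L" by (simp add: algebra_simps)
  then show "\<exists>s r. x - s * y m - (\<Sum>i<m. r i * y i) \<in> L" by blast
next
  fix x assume "\<exists>s r. x - s * y m - (\<Sum>i<m. r i * y i) \<in> L"
  then obtain s r where h: "x - s * y m - (\<Sum>i<m. r i * y i) \<in> L" by blast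
  have "(\<Sum>i<m. (r(m := s)) i * y i) = (\<Sum>i<m. r i * y i)" by (rule sum.cong) auto
  then have "x - (\<Sum>i<Suc m. (r(m := s)) i * y i) \<in> L" using h by (simp add: algebra_simps)
  then show "\<exists>r. x - (\<Sum>i<Suc m. r i * y i) \<in> L" by blast
qed

lemma genI_Suc_first: "genI L y (Suc m) = genI (plus1 L (y 0)) (y \<circ> Suc) m"
proof (rule set_eqI, unfold genI_mem plus1_mem_iff, rule iffI)
  fix x assume "\<exists>r. x - (\<Sum>i<Suc m. r i * y i) \<in> L"
  then obtain r where "x - (\<Sum>i<Suc m. r i * y i) \<in> L" by blast
  then have "x - (\<Sum>i<m. (r \<circ> Suc) i * (y \<circ> Suc) i) - r 0 * y 0 \<in> L"
    unfolding sum.lessThan_Suc_shift by (simp add: algebra_simps)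
  then show "\<exists>r s. x - (\<Sum>i<m. r i * (y \<circ> Suc) i) - s * y 0 \<in> L" by blast
next
  fix x assume "\<exists>r s. x - (\<Sum>i<m. r i * (y \<circ> Suc) i) - s * y 0 \<in> L"
  then obtain r s where h: "x - (\<Sum>i<m. r i * (y \<circ> Suc) i) - s * y 0 \<in> L" by blast
  let ?r = "\<lambda>i. case i of 0 \<Rightarrow> s | Suc j \<Rightarrow> r j"
  have "x - (\<Sum>i<Suc m. ?r i * y i) \<in> L" using h
    unfolding sum.lessThan_Suc_shift by (simp add: algebra_simps)
  then show "\<exists>r. x - (\<Sum>i<Suc m. r i * y i) \<in> L" by blast
qed

lemma genI_first_plus1: "genI L y (Suc m) = plus1 (genI L (y \<circ> Suc) m) (y 0)"
  by (simp add: genI_Suc_first genI_plus1)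

lemma regL_mono: "regL L y m \<Longrightarrow> k \<le> m \<Longrightarrow> regL L y k"
  unfolding regL_def by auto

lemma nzd_NZ: "is_ideal L \<Longrightarrow> regL L y (Suc m) \<Longrightarrow> nzd (genI L (y \<circ> Suc) m) (y 0)"
proof (induction m)
  case 0
  then show ?case by (auto simp: regL_def genI_0)
next
  case (Suc m)
  let ?K = "genI L (y \<circ> Suc) m"
  have K: "is_ideal ?K" using Suc.prems genI_ideal by blast
  have IH: "nzd ?K (y 0)" using Suc regL_mono by (metis le_SucI order_refl)
  have reg: "nzd (genI L y (Suc m)) (y (Suc m))" using Suc.prems unfolding regL_def by auto
  show ?case unfolding nzd_def
  proof (intro allI impI)
    fix X assume "y 0 * X \<in> genI L (y \<circ> Suc) (Suc m)"
    then obtain t where t: "y 0 * X - t * y (Suc m) \<in> ?K"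
      unfolding genI_Suc_last plus1_def by auto
    have "y (Suc m) * t - X * y 0 = - (y 0 * X - t * y (Suc m))" by (simp add: algebra_simps)
    then have "y (Suc m) * t - X * y 0 \<in> ?K" using ideal_neg[OF K t] by metis
    then have "y (Suc m) * t \<in> plus1 ?K (y 0)" unfolding plus1_mem_iff by blast
    then have "t \<in> plus1 ?K (y 0)" using reg unfolding nzd_def genI_first_plus1 by blast
    then obtain s where s: "t - s * y 0 \<in> ?K" unfolding plus1_def by auto
    have "y 0 * X - t * y (Suc m) + (t - s * y 0) * y (Suc m) \<in> ?K"
      by (rule ideal_add[OF K t ideal_mult2[OF K s]])
    then have "y 0 * (X - s * y (Suc m)) \<in> ?K" by (simp add: algebra_simps)
    then have "X - s * y (Suc m) \<in> ?K" using IH unfolding nzd_def by blast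
    then show "X \<in> genI L (y \<circ> Suc) (Suc m)"
      unfolding genI_Suc_last plus1_def by auto
  qed
qed

lemma nzd_power: assumes "nzd K b" shows "nzd K (b ^ e)"
proof (induction e)
  case 0 show ?case by (simp add: nzd_def)
next
  case (Suc e)
  show ?case unfolding nzd_def
  proof (intro allI impI)
    fix u assume "b ^ Suc e * u \<in> K"
    then have "b * (b ^ e * u) \<in> K" by (simp add: mult.assoc)
    then have "b ^ e * u \<in> K" using assms unfolding nzd_def by blast
    then show "u \<in> K" using Suc unfolding nzd_def by blast
  qed
qed

lemma nzd_plus1_power:
  assumes K: "is_ideal K" and z: "nzd K z" and b: "nzd (plus1 K z) b"
  shows "nzd (plus1 K (z ^ e)) b"
proof (induction e)
  case 0
  have "\<And>u. u \<in> plus1 K (z ^ 0)" unfolding plus1_mem_iff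
    by (rule_tac x=u in exI) (simp add: ideal_0 K)
  then show ?case unfolding nzd_def by blast
next
  case (Suc e)
  show ?case unfolding nzd_def
  proof (intro allI impI)
    fix u assume "b * u \<in> plus1 K (z ^ Suc e)"
    then obtain s where s: "b * u - s * z ^ Suc e \<in> K" unfolding plus1_mem_iff by auto
    have "b * u - (s * z ^ e) * z = b * u - s * z ^ Suc e" by (simp add: algebra_simps)
    then have "b * u \<in> plus1 K z" unfolding plus1_mem_iff using s by metis
    then have "u \<in> plus1 K z" using b unfolding nzd_def by blast
    then obtain u1 where u1: "u - u1 * z \<in> K" unfolding plus1_mem_iff by auto
    have "b * u - s * z ^ Suc e - b * (u - u1 * z) \<in> K"
      by (rule ideal_diff[OF K s ideal_mult[OF K u1]])
    moreover have "b * u - s * z ^ Suc e - b * (u - u1 * z) = z * (b * u1 - s * z ^ e)" by (simp add: algebra_simps)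
    ultimately have "z * (b * u1 - s * z ^ e) \<in> K" by simp
    then have "b * u1 - s * z ^ e \<in> K" using z unfolding nzd_def by blast
    then have "b * u1 \<in> plus1 K (z ^ e)" unfolding plus1_mem_iff by blast
    then have "u1 \<in> plus1 K (z ^ e)" using Suc unfolding nzd_def by blast
    then obtain v where v: "u1 - v * z ^ e \<in> K" unfolding plus1_mem_iff by auto
    have "u - u1 * z + (u1 - v * z ^ e) * z \<in> K" by (rule ideal_add[OF K u1 ideal_mult2[OF K v]])
    moreover have "u - u1 * z + (u1 - v * z ^ e) * z = u - v * z ^ Suc e" by (simp add: algebra_simps)
    ultimately show "u \<in> plus1 K (z ^ Suc e)" unfolding plus1_mem_iff by metis
  qed
qed

lemma regL_shift:
  assumes L: "is_ideal L" and r: "regL L y (Suc m)"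
  shows "regL (plus1 L (y 0 ^ e)) (y \<circ> Suc) m"
  unfolding regL_def
proof (intro allI impI)
  fix j assume j: "j < m"
  let ?K = "genI L (y \<circ> Suc) j"
  have K: "is_ideal ?K" using genI_ideal L by blast
  have z: "nzd ?K (y 0)" using nzd_NZ[OF L regL_mono[OF r]] j by simp
  have b: "nzd (plus1 ?K (y 0)) (y (Suc j))" using r j unfolding regL_def genI_first_plus1[symmetric] by auto
  show "nzd (genI (plus1 L (y 0 ^ e)) (y \<circ> Suc) j) ((y \<circ> Suc) j)"
    using nzd_plus1_power[OF K z b, of e] by (simp add: genI_plus1)
qed

lemma claimG:
  assumes "is_ideal L" "regL L y m" "(\<Prod>i<m. y i ^ (p - 1)) * c \<in> genI L (\<lambda>i. y i ^ p) m" "p \<ge> 1"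
  shows "c \<in> genI L y m"
  using assms
proof (induction m arbitrary: L y c)
  case 0
  then show ?case by (simp add: genI_0)
next
  case (Suc m)
  let ?L' = "plus1 L (y 0 ^ p)"
  let ?K = "genI L (y \<circ> Suc) m"
  have L': "is_ideal ?L'" using plus1_ideal Suc.prems by blast
  have K: "is_ideal ?K" using genI_ideal Suc.prems by blast
  have r': "regL ?L' (y \<circ> Suc) m" using regL_shift Suc.prems by blast
  have "(\<Prod>i<m. (y \<circ> Suc) i ^ (p - 1)) * (y 0 ^ (p - 1) * c) \<in> genI ?L' (\<lambda>i. (y \<circ> Suc) i ^ p) m"
  proof -
    have e1: "(\<Prod>i<Suc m. y i ^ (p - 1)) = y 0 ^ (p - 1) * (\<Prod>i<m. (y \<circ> Suc) i ^ (p - 1))"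
      unfolding prod.lessThan_Suc_shift by simp
    have e2: "genI L (\<lambda>i. y i ^ p) (Suc m) = genI ?L' (\<lambda>i. (y \<circ> Suc) i ^ p) m"
      using genI_Suc_first[of L "\<lambda>i. y i ^ p" m] by (simp add: comp_def)
    show ?thesis using Suc.prems(3) unfolding e1 e2 by (simp add: algebra_simps)
  qed
  then have "y 0 ^ (p - 1) * c \<in> genI ?L' (y \<circ> Suc) m"
    using Suc.IH[OF L' r'] Suc.prems(4) by blast
  then obtain s where s: "y 0 ^ (p - 1) * c - s * y 0 ^ p \<in> ?K"
    unfolding genI_plus1 plus1_mem_iff by blast
  have pp: "y 0 ^ p = y 0 ^ (p - 1) * y 0" using Suc.prems(4)
    by (metis One_nat_def Suc_pred' less_eq_Suc_le power_Suc2)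
  have "y 0 ^ (p - 1) * (c - s * y 0) \<in> ?K" using s by (simp add: pp algebra_simps)
  moreover have "nzd ?K (y 0 ^ (p - 1))"
    using nzd_power[OF nzd_NZ[OF Suc.prems(1,2)]] .
  ultimately have "c - s * y 0 \<in> ?K" unfolding nzd_def by blast
  then show ?case unfolding genI_first_plus1 plus1_mem_iff by blast
qed



lemma lookup_const_mult: "Poly_Mapping.lookup (const_poly r * c) m = r * Poly_Mapping.lookup c m"
  unfolding const_poly_def mult_map_scale_conv_mult[symmetric]
  by (simp add: map.rep_eq when_def)

lemma keys_const_mult: "Poly_Mapping.keys (const_poly r * c) \<subseteq> Poly_Mapping.keys c"
  by (auto simp: in_keys_iff lookup_const_mult)

definition cin :: "'a::comm_ring_1 set \<Rightarrow> 'a mpoly \<Rightarrow> bool" where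
  "cin L y \<longleftrightarrow> (\<forall>m. Poly_Mapping.lookup y m \<in> L)"

lemma cin_add: "is_ideal L \<Longrightarrow> cin L x \<Longrightarrow> cin L y \<Longrightarrow> cin L (x + y)"
  by (simp add: cin_def lookup_add ideal_add)

lemma cin_sum: "is_ideal L \<Longrightarrow> (\<And>i. i \<in> S \<Longrightarrow> cin L (f i)) \<Longrightarrow> cin L (sum f S)"
  by (simp add: cin_def lookup_sum ideal_sum)

lemma cin_single: "is_ideal L \<Longrightarrow> r \<in> L \<Longrightarrow> cin L (Poly_Mapping.single m r)"
  by (simp add: cin_def lookup_single when_def ideal_0)

lemma cin_neg: "is_ideal L \<Longrightarrow> cin L x \<Longrightarrow> cin L (- x)"
  by (simp add: cin_def ideal_neg)

lemma genI_gen: "is_ideal L \<Longrightarrow> j < k \<Longrightarrow> r * y j \<in> genI L y k"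
proof -
  assume L: "is_ideal L" and j: "j < k"
  have "(\<Sum>i<k. (if i = j then r else 0) * y i) = (\<Sum>i<k. if i = j then r * y i else 0)"
    by (rule sum.cong) auto
  also have "\<dots> = r * y j" using j by (simp add: sum.delta)
  finally show ?thesis unfolding genI_mem using ideal_0[OF L] by (metis diff_self)
qed

lemma genI_mono: "is_ideal L \<Longrightarrow> k \<le> n \<Longrightarrow> genI L y k \<subseteq> genI L y n"
proof
  fix x assume "is_ideal L" "k \<le> n" "x \<in> genI L y k"
  then obtain r where r: "x - (\<Sum>i<k. r i * y i) \<in> L" unfolding genI_mem by blast
  have "(\<Sum>i<n. (if i < k then r i else 0) * y i) = (\<Sum>i<k. r i * y i)"
    using \<open>k \<le> n\<close> by (intro sum.mono_neutral_cong_right) auto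
  then show "x \<in> genI L y n" unfolding genI_mem using r by metis
qed

lemma ideal_zero: "is_ideal {0::'a::comm_ring_1}"
  by (simp add: is_ideal_def)

lemma lookup_minus_single: "Poly_Mapping.lookup (m - Poly_Mapping.single j t) k = Poly_Mapping.lookup m k - (if k = j then t else 0)"
  by (simp add: lookup_minus lookup_single when_def)

locale charp =
  fixes p :: nat and a :: "nat \<Rightarrow> 'a::comm_ring_1"
  assumes charp: "of_nat p = (0::'a)" and p2: "p \<ge> 2"
begin

lemma of_nat_mod: "(of_nat k :: 'a) = of_nat (k mod p)"
proof -
  have "k = p * (k div p) + k mod p" by simp
  then have "(of_nat k :: 'a) = of_nat p * of_nat (k div p) + of_nat (k mod p)"
    by (metis of_nat_add of_nat_mult)
  then show ?thesis using charp by simp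
qed

definition W :: "nat \<Rightarrow> nat \<Rightarrow> 'a" where
  "W j t = a j ^ (p - 1 - t) * of_nat (fact t)"

definition phi :: "nat \<Rightarrow> 'a mpoly \<Rightarrow> 'a mpoly" where
  "phi j y = (\<Sum>m\<in>Poly_Mapping.keys y.
     Poly_Mapping.single (m - Poly_Mapping.single j (Poly_Mapping.lookup m j mod p))
       (W j (Poly_Mapping.lookup m j mod p) * Poly_Mapping.lookup y m))"

lemma lin_phi: "lin (phi j)"
  unfolding lin_def phi_def
  by (intro allI setsum_keys_plus_distrib) (auto simp: single_add distrib_left lookup_add)

lemma phi_single: "phi j (Poly_Mapping.single m r) =
  Poly_Mapping.single (m - Poly_Mapping.single j (Poly_Mapping.lookup m j mod p)) (W j (Poly_Mapping.lookup m j mod p) * r)"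
  by (simp add: phi_def)

definition E :: "nat \<Rightarrow> 'a mpoly \<Rightarrow> 'a mpoly" where
  "E i h = pdiff i h - const_poly (a i) * h"

lemma lin_E: "lin (E i)"
  unfolding lin_def E_def using lin_pdiff[of i] unfolding lin_def by (simp add: algebra_simps)

lemma E_single: "E i (Poly_Mapping.single m r) =
  Poly_Mapping.single (m - Poly_Mapping.single i 1) (of_nat (Poly_Mapping.lookup m i) * r)
  - Poly_Mapping.single m (a i * r)"
  by (simp add: E_def pdiff_single const_mult_single)


lemma phi_E_same_single:
  "phi j (E j (Poly_Mapping.single m r)) =
    (if Poly_Mapping.lookup m j mod p = 0 then - Poly_Mapping.single m (a j ^ p * r) else 0)"
proof -
  let ?mj = "Poly_Mapping.lookup m j"
  define t where "t = ?mj mod p"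
  have tp: "t < p" using p2 unfolding t_def by simp
  have ph: "phi j (E j (Poly_Mapping.single m r)) =
     phi j (Poly_Mapping.single (m - Poly_Mapping.single j 1) (of_nat ?mj * r))
     - phi j (Poly_Mapping.single m (a j * r))"
    unfolding E_single using lin_diff[OF lin_phi] by simp
  have l1: "Poly_Mapping.lookup (m - Poly_Mapping.single j 1) j = ?mj - 1"
    by (simp add: lookup_minus_single)
  show ?thesis
  proof (cases "t = 0")
    case True
    have "(of_nat ?mj :: 'a) = 0" using True of_nat_mod[of ?mj] unfolding t_def by simp
    then have z: "phi j (Poly_Mapping.single (m - Poly_Mapping.single j 1) (of_nat ?mj * r)) = 0"
      by (simp add: phi_single lin_0[OF lin_phi])
    have "a j ^ (p - 1) * a j = a j ^ p" 
    proof -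
      have "p = Suc (p - 1)" using p2 by simp
      then show ?thesis by (metis power_Suc2)
    qed
    then have "phi j (Poly_Mapping.single m (a j * r)) = Poly_Mapping.single m (a j ^ p * r)"
      using True unfolding t_def by (simp add: phi_single W_def mult.assoc[symmetric])
    then show ?thesis using ph z True unfolding t_def by simp
  next
    case False
    have mj1: "?mj \<noteq> 0" proof assume "?mj = 0" then show False using False unfolding t_def by simp qed
    have "?mj = Suc (?mj - 1)" using mj1 by simp
    then have "t = (if Suc ((?mj - 1) mod p) = p then 0 else Suc ((?mj - 1) mod p))"
      unfolding t_def by (metis mod_Suc)
    then have tm: "(?mj - 1) mod p = t - 1" using False by (auto split: if_splits)
    have tle: "t \<le> ?mj" unfolding t_def by simp
    have meq: "(m - Poly_Mapping.single j 1) - Poly_Mapping.single j (t - 1) = m - Poly_Mapping.single j t"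
      by (rule poly_mapping_eqI) (use False in \<open>auto simp: lookup_minus_single\<close>)
    have ofn: "(of_nat ?mj :: 'a) = of_nat t" using of_nat_mod[of ?mj] unfolding t_def by simp
    have pe: "p - 1 - (t - 1) = Suc (p - 1 - t)" using tp False by simp
    have "(fact t :: nat) = fact (t - 1) * t" using False
      by (simp add: fact_reduce[of t] mult.commute)
    then have fe: "(of_nat (fact t) :: 'a) = of_nat (fact (t - 1)) * of_nat t"
      by (metis of_nat_mult)
    have c: "W j (t - 1) * (of_nat ?mj * r) = W j t * (a j * r)"
      unfolding W_def ofn pe fe by (simp add: algebra_simps)
    have "phi j (Poly_Mapping.single (m - Poly_Mapping.single j 1) (of_nat ?mj * r))
        = phi j (Poly_Mapping.single m (a j * r))"
      unfolding phi_single l1 tm[unfolded t_def] meq[unfolded t_def]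
      using c unfolding t_def by simp
    then show ?thesis using ph False unfolding t_def by simp
  qed
qed

lemma phi_E_comm_single:
  assumes ij: "i \<noteq> j"
  shows "phi j (E i (Poly_Mapping.single m r)) = E i (phi j (Poly_Mapping.single m r))"
proof -
  let ?t = "Poly_Mapping.lookup m j mod p"
  have l1: "Poly_Mapping.lookup (m - Poly_Mapping.single i 1) j = Poly_Mapping.lookup m j"
    using ij by (simp add: lookup_minus_single)
  have l2: "Poly_Mapping.lookup (m - Poly_Mapping.single j ?t) i = Poly_Mapping.lookup m i"
    using ij by (simp add: lookup_minus_single)
  have meq: "(m - Poly_Mapping.single i 1) - Poly_Mapping.single j ?t = (m - Poly_Mapping.single j ?t) - Poly_Mapping.single i 1"
    by (rule poly_mapping_eqI) (simp add: lookup_minus_single)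
  have "phi j (E i (Poly_Mapping.single m r)) =
     phi j (Poly_Mapping.single (m - Poly_Mapping.single i 1) (of_nat (Poly_Mapping.lookup m i) * r))
     - phi j (Poly_Mapping.single m (a i * r))"
    unfolding E_single using lin_diff[OF lin_phi] by simp
  also have "\<dots> = Poly_Mapping.single ((m - Poly_Mapping.single j ?t) - Poly_Mapping.single i 1) (W j ?t * (of_nat (Poly_Mapping.lookup m i) * r))
      - Poly_Mapping.single (m - Poly_Mapping.single j ?t) (W j ?t * (a i * r))"
    unfolding phi_single l1 meq ..
  also have "\<dots> = E i (phi j (Poly_Mapping.single m r))"
    unfolding phi_single E_single l2 by (simp add: algebra_simps)
  finally show ?thesis .
qed

lemma phi_E_comm: assumes "i \<noteq> j" shows "phi j (E i h) = E i (phi j h)"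
proof -
  have l1: "lin (phi j \<circ> E i)" by (rule lin_comp[OF lin_phi lin_E])
  have l2: "lin (E i \<circ> phi j)" by (rule lin_comp[OF lin_E lin_phi])
  have "(phi j \<circ> E i) h = (E i \<circ> phi j) h"
    by (rule lin_eqI[OF l1 l2]) (simp add: phi_E_comm_single[OF assms])
  then show ?thesis by simp
qed

lemma cin_phi_E_same:
  assumes L: "is_ideal L" and aL: "\<And>x. a j ^ p * x \<in> L"
  shows "cin L (phi j (E j h))"
proof -
  have "phi j (E j h) = (\<Sum>m\<in>Poly_Mapping.keys h. (phi j \<circ> E j) (Poly_Mapping.single m (Poly_Mapping.lookup h m)))"
    using lin_expand[OF lin_comp[OF lin_phi lin_E], of j j h] by simp
  moreover have "cin L ((phi j \<circ> E j) (Poly_Mapping.single m r))" for m r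
  proof (cases "Poly_Mapping.lookup m j mod p = 0")
    case True
    then show ?thesis using phi_E_same_single[of j m r] cin_neg[OF L cin_single[OF L aL]] by simp
  next
    case False
    then show ?thesis using phi_E_same_single[of j m r] ideal_0[OF L] by (simp add: cin_def)
  qed
  ultimately show ?thesis by (auto intro: cin_sum[OF L])
qed

lemma cin_phi: assumes L: "is_ideal L" and y: "cin L y" shows "cin L (phi j y)"
proof -
  have "phi j y = (\<Sum>m\<in>Poly_Mapping.keys y. phi j (Poly_Mapping.single m (Poly_Mapping.lookup y m)))"
    using lin_expand[OF lin_phi] by blast
  moreover have "cin L (phi j (Poly_Mapping.single m (Poly_Mapping.lookup y m)))" for m
  proof -
    have "Poly_Mapping.lookup y m \<in> L" using y by (simp add: cin_def)
    then show ?thesis unfolding phi_single by (rule cin_single[OF L ideal_mult[OF L]])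
  qed
  ultimately show ?thesis by (auto intro: cin_sum[OF L])
qed

fun Phi :: "nat \<Rightarrow> 'a mpoly \<Rightarrow> 'a mpoly" where
  "Phi 0 y = y"
| "Phi (Suc k) y = Phi k (phi k y)"

lemma lin_Phi: "lin (Phi k)"
proof (induction k)
  case 0 then show ?case by (simp add: lin_def)
next
  case (Suc k)
  have "Phi (Suc k) = Phi k \<circ> phi k" by (rule ext) simp
  then show ?case using lin_comp[OF Suc lin_phi, of k] by (simp add: comp_def)
qed

lemma cin_Phi: "is_ideal L \<Longrightarrow> cin L y \<Longrightarrow> cin L (Phi k y)"
  by (induction k arbitrary: y) (auto simp: cin_phi)

lemma cin_mono: "L \<subseteq> L' \<Longrightarrow> cin L y \<Longrightarrow> cin L' y"
  by (auto simp: cin_def)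

lemma Phi_E: "i < k \<Longrightarrow> cin (genI {0} (\<lambda>i. a i ^ p) k) (Phi k (E i h))"
proof (induction k arbitrary: h)
  case 0 then show ?case by simp
next
  case (Suc k)
  let ?J = "genI {0} (\<lambda>i. a i ^ p) (Suc k)"
  have J: "is_ideal ?J" using genI_ideal ideal_zero by blast
  show ?case
  proof (cases "i < k")
    case True
    then have "cin (genI {0} (\<lambda>i. a i ^ p) k) (Phi k (E i (phi k h)))" using Suc.IH by blast
    moreover have "genI {0} (\<lambda>i. a i ^ p) k \<subseteq> ?J" using genI_mono ideal_zero by (metis le_SucI order_refl)
    ultimately show ?thesis using True phi_E_comm[of i k h] by (simp add: cin_mono)
  next
    case False
    then have ik: "i = k" using Suc.prems by simp
    have "\<And>x. a k ^ p * x \<in> ?J"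
      using genI_gen[OF ideal_zero, of k "Suc k" _ "\<lambda>i. a i ^ p"] by (simp add: mult.commute)
    then have "cin ?J (phi k (E k h))" using cin_phi_E_same[OF J] by blast
    then show ?thesis using ik cin_Phi[OF J] by simp
  qed
qed

definition Pset :: "'a mpoly set" where
  "Pset = {c. \<forall>m\<in>Poly_Mapping.keys c. \<forall>j. p dvd Poly_Mapping.lookup m j}"

lemma const_mult_const: "const_poly r * const_poly s = const_poly (r * s)"
  by (simp add: const_poly_def mult_single)

lemma phi_P: assumes c: "c \<in> Pset" shows "phi j c = const_poly (a j ^ (p - 1)) * c"
proof -
  have "phi j c = (\<Sum>m\<in>Poly_Mapping.keys c. phi j (Poly_Mapping.single m (Poly_Mapping.lookup c m)))"
    using lin_expand[OF lin_phi] by blast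
  also have "\<dots> = (\<Sum>m\<in>Poly_Mapping.keys c. const_poly (a j ^ (p - 1)) * Poly_Mapping.single m (Poly_Mapping.lookup c m))"
  proof (rule sum.cong)
    fix m assume "m \<in> Poly_Mapping.keys c"
    then have "Poly_Mapping.lookup m j mod p = 0" using c unfolding Pset_def by auto
    then show "phi j (Poly_Mapping.single m (Poly_Mapping.lookup c m)) = const_poly (a j ^ (p - 1)) * Poly_Mapping.single m (Poly_Mapping.lookup c m)"
      by (simp add: phi_single const_mult_single W_def)
  qed simp
  also have "\<dots> = const_poly (a j ^ (p - 1)) * c"
    using lin_expand[OF lin_const, of "a j ^ (p - 1)" c] by simp
  finally show ?thesis .
qed

lemma Pset_const: "c \<in> Pset \<Longrightarrow> const_poly r * c \<in> Pset"
  using keys_const_mult[of r c] unfolding Pset_def by blast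

lemma Phi_P: "c \<in> Pset \<Longrightarrow> Phi k c = const_poly (\<Prod>i<k. a i ^ (p - 1)) * c"
proof (induction k arbitrary: c)
  case 0 then show ?case by (simp add: const_poly_def)
next
  case (Suc k)
  have "Phi (Suc k) c = Phi k (const_poly (a k ^ (p - 1)) * c)" using phi_P[OF Suc.prems] by simp
  also have "\<dots> = const_poly (\<Prod>i<k. a i ^ (p - 1)) * (const_poly (a k ^ (p - 1)) * c)"
    using Suc.IH Pset_const[OF Suc.prems] by blast
  also have "\<dots> = const_poly (\<Prod>i<Suc k. a i ^ (p - 1)) * c"
    by (simp add: mult.assoc[symmetric] const_mult_const)
  finally show ?case .
qed

lemma key_coeff:
  assumes c: "c \<in> Pset" and ch: "c = (\<Sum>i<n. E i (h i))"
  shows "(\<Prod>i<n. a i ^ (p - 1)) * Poly_Mapping.lookup c m \<in> genI {0} (\<lambda>i. a i ^ p) n"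
proof -
  let ?J = "genI {0} (\<lambda>i. a i ^ p) n"
  have J: "is_ideal ?J" using genI_ideal ideal_zero by blast
  have "Phi n c = (\<Sum>i<n. Phi n (E i (h i)))" using ch lin_sum[OF lin_Phi] by simp
  moreover have "cin ?J (\<Sum>i<n. Phi n (E i (h i)))" by (intro cin_sum[OF J] Phi_E) simp
  ultimately have "cin ?J (Phi n c)" by simp
  then show ?thesis using Phi_P[OF c, of n] by (simp add: cin_def lookup_const_mult)
qed

end


lemma pr_mem: "f \<in> poly_ring n \<longleftrightarrow> (\<forall>m\<in>Poly_Mapping.keys f. Poly_Mapping.keys m \<subseteq> {..<n})"
  by (simp add: poly_ring_def)

lemma pr_keys: "f \<in> poly_ring n \<Longrightarrow> Poly_Mapping.keys g \<subseteq> Poly_Mapping.keys f \<Longrightarrow> g \<in> poly_ring n"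
  unfolding pr_mem by blast

lemma pr_add: "f \<in> poly_ring n \<Longrightarrow> g \<in> poly_ring n \<Longrightarrow> f + g \<in> poly_ring n"
  unfolding pr_mem using keys_add[of f g] by blast

lemma pr_neg: "f \<in> poly_ring n \<Longrightarrow> - f \<in> poly_ring n"
  unfolding pr_mem by simp

lemma pr_diff: "f \<in> poly_ring n \<Longrightarrow> g \<in> poly_ring n \<Longrightarrow> f - g \<in> poly_ring n"
  unfolding pr_mem using keys_diff[of f g] by blast

lemma pr_0: "0 \<in> poly_ring n"
  unfolding pr_mem by simp

lemma pr_mult: "f \<in> poly_ring n \<Longrightarrow> g \<in> poly_ring n \<Longrightarrow> f * g \<in> poly_ring n"
proof -
  assume f: "f \<in> poly_ring n" and g: "g \<in> poly_ring n"
  show ?thesis unfolding pr_mem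
  proof
    fix m assume "m \<in> Poly_Mapping.keys (f * g)"
    then obtain u v where "m = u + v" "u \<in> Poly_Mapping.keys f" "v \<in> Poly_Mapping.keys g"
      using keys_mult[of f g] by blast
    then show "Poly_Mapping.keys m \<subseteq> {..<n}"
      using f g keys_add[of u v] unfolding pr_mem by blast
  qed
qed

lemma pr_const: "const_poly r \<in> poly_ring n"
  unfolding pr_mem const_poly_def by simp

lemma pr_1: "1 \<in> poly_ring n"
  using pr_const[of 1 n] by (simp add: const_poly_def)

lemma pr_power: "f \<in> poly_ring n \<Longrightarrow> f ^ k \<in> poly_ring n"
  by (induction k) (auto simp: pr_1 pr_mult)

lemma pr_const_mult: "f \<in> poly_ring n \<Longrightarrow> const_poly r * f \<in> poly_ring n"
  by (rule pr_keys[OF _ keys_const_mult])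

lemma pr_sum: "(\<And>i. i \<in> S \<Longrightarrow> f i \<in> poly_ring n) \<Longrightarrow> sum f S \<in> poly_ring n"
  by (induction S rule: infinite_finite_induct) (auto simp: pr_0 pr_add)

lemma keys_minus_single: "Poly_Mapping.keys (m - Poly_Mapping.single i (k::nat)) \<subseteq> Poly_Mapping.keys m"
  by (auto simp: in_keys_iff lookup_minus_single)

lemma pr_pdiff: "f \<in> poly_ring n \<Longrightarrow> pdiff i f \<in> poly_ring n"
  unfolding pdiff_def
proof (rule pr_sum)
  fix m assume f: "f \<in> poly_ring n" and m: "m \<in> Poly_Mapping.keys f"
  show "Poly_Mapping.single (m - Poly_Mapping.single i 1) (of_nat (Poly_Mapping.lookup m i) * Poly_Mapping.lookup f m) \<in> poly_ring n"
    unfolding pr_mem using f m keys_minus_single[of m i 1] unfolding pr_mem by auto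
qed

context charp
begin

lemma image_D_mem: "x \<in> image_D n a \<longleftrightarrow> (\<exists>h. (\<forall>i<n. h i \<in> poly_ring n) \<and> x = (\<Sum>i<n. E i (h i)))"
  unfolding image_D_def E_def by blast

lemma pr_E: "h \<in> poly_ring n \<Longrightarrow> E i h \<in> poly_ring n"
  unfolding E_def by (intro pr_diff pr_pdiff pr_const_mult)

lemma D_sub: "image_D n a \<subseteq> poly_ring n"
proof
  fix x assume "x \<in> image_D n a"
  then obtain h where h: "\<forall>i<n. h i \<in> poly_ring n" "x = (\<Sum>i<n. E i (h i))" unfolding image_D_mem by blast
  then show "x \<in> poly_ring n" by (auto intro!: pr_sum pr_E)
qed

lemma D_0: "0 \<in> image_D n a"
  unfolding image_D_mem by (rule exI[of _ "\<lambda>_. 0"]) (simp add: pr_0 lin_0[OF lin_E])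

lemma D_add: "x \<in> image_D n a \<Longrightarrow> y \<in> image_D n a \<Longrightarrow> x + y \<in> image_D n a"
proof -
  assume "x \<in> image_D n a" "y \<in> image_D n a"
  then obtain h k where h: "\<forall>i<n. h i \<in> poly_ring n" "x = (\<Sum>i<n. E i (h i))"
    and k: "\<forall>i<n. k i \<in> poly_ring n" "y = (\<Sum>i<n. E i (k i))" unfolding image_D_mem by blast
  have "x + y = (\<Sum>i<n. E i (h i + k i))"
    using h k lin_E unfolding lin_def by (simp add: sum.distrib)
  then show ?thesis unfolding image_D_mem using h k by (intro exI[of _ "\<lambda>i. h i + k i"]) (simp add: pr_add)
qed

lemma D_neg: "x \<in> image_D n a \<Longrightarrow> - x \<in> image_D n a"
proof -
  assume "x \<in> image_D n a"
  then obtain h where h: "\<forall>i<n. h i \<in> poly_ring n" "x = (\<Sum>i<n. E i (h i))" unfolding image_D_mem by blast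
  have "- x = (\<Sum>i<n. E i (- h i))"
    using h lin_neg[OF lin_E] by (simp add: sum_negf)
  then show ?thesis unfolding image_D_mem using h by (intro exI[of _ "\<lambda>i. - h i"]) (simp add: pr_neg)
qed

lemma D_diff: "x \<in> image_D n a \<Longrightarrow> y \<in> image_D n a \<Longrightarrow> x - y \<in> image_D n a"
  using D_add D_neg by (metis diff_conv_add_uminus)

lemma D_sum: "(\<And>i. i \<in> S \<Longrightarrow> f i \<in> image_D n a) \<Longrightarrow> sum f S \<in> image_D n a"
  by (induction S rule: infinite_finite_induct) (auto simp: D_0 D_add)

lemma E_const: "E i (const_poly r * h) = const_poly r * E i h"
proof -
  have l1: "lin (E i \<circ> (\<lambda>x. const_poly r * x))" by (rule lin_comp[OF lin_E lin_const])
  have l2: "lin ((\<lambda>x. const_poly r * x) \<circ> E i)" by (rule lin_comp[OF lin_const lin_E])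
  have "(E i \<circ> (\<lambda>x. const_poly r * x)) h = ((\<lambda>x. const_poly r * x) \<circ> E i) h"
    by (rule lin_eqI[OF l1 l2]) (simp add: const_mult_single E_single right_diff_distrib algebra_simps)
  then show ?thesis by simp
qed

lemma D_const: "x \<in> image_D n a \<Longrightarrow> const_poly r * x \<in> image_D n a"
proof -
  assume "x \<in> image_D n a"
  then obtain h where h: "\<forall>i<n. h i \<in> poly_ring n" "x = (\<Sum>i<n. E i (h i))" unfolding image_D_mem by blast
  have "const_poly r * x = (\<Sum>i<n. E i (const_poly r * h i))"
    using h by (simp add: sum_distrib_left E_const)
  then show ?thesis unfolding image_D_mem using h by (intro exI[of _ "\<lambda>i. const_poly r * h i"]) (simp add: pr_const_mult)
qed

lemma D_basic: assumes X: "X \<in> poly_ring n" and i: "i < n"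
  shows "const_poly (a i) * X - pdiff i X \<in> image_D n a"
proof -
  let ?h = "\<lambda>j. if j = i then - X else 0"
  have "(\<Sum>j<n. E j (?h j)) = (\<Sum>j<n. if j = i then E j (- X) else 0)"
    by (rule sum.cong) (auto simp: lin_0[OF lin_E])
  also have "\<dots> = E i (- X)" using i by (simp add: sum.delta)
  also have "\<dots> = const_poly (a i) * X - pdiff i X" unfolding E_def using lin_neg[OF lin_pdiff] by simp
  finally show ?thesis unfolding image_D_mem using X by (intro exI[of _ ?h]) (auto simp: pr_0 pr_neg)
qed

lemma pdiff_pow_single: "(pdiff i ^^ k) (Poly_Mapping.single m r) =
   Poly_Mapping.single (m - Poly_Mapping.single i k) (of_nat (\<Prod>j<k. Poly_Mapping.lookup m i - j) * r)"
proof (induction k)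
  case 0 then show ?case by simp
next
  case (Suc k)
  have e: "m - Poly_Mapping.single i k - Poly_Mapping.single i 1 = m - Poly_Mapping.single i (Suc k)"
    by (rule poly_mapping_eqI) (simp add: lookup_minus_single)
  have "(pdiff i ^^ Suc k) (Poly_Mapping.single m r) = pdiff i ((pdiff i ^^ k) (Poly_Mapping.single m r))" by simp
  also have "\<dots> = Poly_Mapping.single (m - Poly_Mapping.single i (Suc k))
      (of_nat (Poly_Mapping.lookup m i - k) * (of_nat (\<Prod>j<k. Poly_Mapping.lookup m i - j) * r))"
    unfolding Suc pdiff_single e by (simp add: lookup_minus_single)
  also have "\<dots> = Poly_Mapping.single (m - Poly_Mapping.single i (Suc k)) (of_nat (\<Prod>j<Suc k. Poly_Mapping.lookup m i - j) * r)"
  proof -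
    have "(\<Prod>j<Suc k. Poly_Mapping.lookup m i - j) = (\<Prod>j<k. Poly_Mapping.lookup m i - j) * (Poly_Mapping.lookup m i - k)"
      by simp
    then show ?thesis by (simp only: of_nat_mult mult_ac)
  qed
  finally show ?case .
qed

lemma lin_pdiff_pow: "lin (pdiff i ^^ k)"
proof (induction k)
  case 0 then show ?case by (simp add: lin_def)
next
  case (Suc k) then show ?case using lin_comp[OF lin_pdiff Suc, of i] by (simp only: funpow.simps)
qed

lemma of_nat_dvd0: "p dvd k \<Longrightarrow> (of_nat k :: 'a) = 0"
  using of_nat_mod[of k] by simp

lemma pdiff_pow_zero: assumes d: "p dvd (\<Prod>j<k. Poly_Mapping.lookup m i - j)"
  shows "(pdiff i ^^ k) (Poly_Mapping.single m (r::'a)) = 0"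
proof -
  have z: "(of_nat (\<Prod>j<k. Poly_Mapping.lookup m i - j) :: 'a) = 0" by (rule of_nat_dvd0[OF d])
  show ?thesis by (simp only: pdiff_pow_single z mult_zero_left single_zero)
qed

lemma pdiff_pow_p: "(pdiff i ^^ p) (g :: 'a mpoly) = 0"
proof -
  have "(pdiff i ^^ p) (Poly_Mapping.single m (r::'a)) = 0" for m r
  proof -
    let ?x = "Poly_Mapping.lookup m i"
    have "?x mod p \<in> {..<p}" using p2 by simp
    then have "(?x - ?x mod p) dvd (\<Prod>j<p. ?x - j)" by (rule dvd_prodI[OF finite_lessThan])
    moreover have "p dvd (?x - ?x mod p)" by (simp add: minus_mod_eq_mult_div)
    ultimately have "p dvd (\<Prod>j<p. ?x - j)" by (rule dvd_trans[rotated])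
    then show ?thesis using pdiff_pow_zero by blast
  qed
  then show ?thesis using lin_expand[OF lin_pdiff_pow[where i=i and k=p], of g] by simp
qed

lemma D_pow: assumes X: "g \<in> poly_ring n" and i: "i < n"
  shows "const_poly (a i) ^ k * g - (pdiff i ^^ k) g \<in> image_D n a"
proof (induction k)
  case 0 then show ?case by (simp add: D_0)
next
  case (Suc k)
  have pk: "(pdiff i ^^ k) g \<in> poly_ring n"
    by (induction k) (auto simp: X pr_pdiff)
  have "const_poly (a i) ^ Suc k * g - (pdiff i ^^ Suc k) g =
     const_poly (a i) * (const_poly (a i) ^ k * g - (pdiff i ^^ k) g)
     + (const_poly (a i) * (pdiff i ^^ k) g - pdiff i ((pdiff i ^^ k) g))" (is "_ = ?R")
    by (simp add: algebra_simps)
  moreover have "?R \<in> image_D n a" by (rule D_add[OF D_const[OF Suc] D_basic[OF pk i]])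
  ultimately show ?case by metis
qed

lemma D_ap: assumes "g \<in> poly_ring n" "i < n" shows "const_poly (a i) ^ p * g \<in> image_D n a"
  using D_pow[OF assms, of p] pdiff_pow_p[of i g] by simp

end


lemma frob:
  fixes x y :: "'b::comm_ring_1"
  assumes pr: "prime p" and cp: "of_nat p = (0::'b)"
  shows "(x + y) ^ p = x ^ p + y ^ p"
proof -
  have p0: "p \<noteq> 0" using pr by auto
  let ?F = "\<lambda>k. of_nat (p choose k) * x ^ k * y ^ (p - k)"
  have "(x + y) ^ p = (\<Sum>k\<le>p. ?F k)" by (simp add: binomial_ring)
  also have "\<dots> = (\<Sum>k\<in>{0, p}. ?F k)"
  proof (rule sum.mono_neutral_right)
    show "\<forall>i\<in>{..p} - {0, p}. ?F i = 0"
    proof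
      fix k assume k: "k \<in> {..p} - {0, p}"
      then have "p dvd (p choose k)" using dvd_choose_prime[of k p] pr p0 by auto
      then obtain q where "p choose k = p * q" by blast
      then have "(of_nat (p choose k) :: 'b) = 0" using cp by simp
      then show "?F k = 0" by simp
    qed
  qed auto
  also have "\<dots> = x ^ p + y ^ p" using p0 by simp
  finally show ?thesis .
qed

lemma frob_sum:
  fixes f :: "'c \<Rightarrow> 'b::comm_ring_1"
  assumes pr: "prime p" and cp: "of_nat p = (0::'b)"
  shows "(sum f S) ^ p = (\<Sum>i\<in>S. f i ^ p)"
proof (induction S rule: infinite_finite_induct)
  case (infinite S) then show ?case using pr by (auto simp: power_0_left)
next
  case empty then show ?case using pr by (auto simp: power_0_left)
next
  case (insert x F) then show ?case by (simp add: frob[OF pr cp])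
qed

lemma single_pow: "\<exists>m'. (Poly_Mapping.single m r) ^ k = Poly_Mapping.single m' (r ^ k) \<and>
   (\<forall>j. Poly_Mapping.lookup m' j = k * Poly_Mapping.lookup m j)"
proof (induction k)
  case 0 then show ?case by (intro exI[of _ 0]) simp
next
  case (Suc k)
  then obtain m' where m': "(Poly_Mapping.single m r) ^ k = Poly_Mapping.single m' (r ^ k)"
    "\<forall>j. Poly_Mapping.lookup m' j = k * Poly_Mapping.lookup m j" by blast
  have "(Poly_Mapping.single m r) ^ Suc k = Poly_Mapping.single (m + m') (r ^ Suc k)"
    using m' by (simp add: mult_single)
  moreover have "\<forall>j. Poly_Mapping.lookup (m + m') j = Suc k * Poly_Mapping.lookup m j"
    using m' by (simp add: lookup_add)
  ultimately show ?case by blast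
qed

lemma Bpow: "(\<forall>x\<in>B. \<forall>y\<in>B. x * y \<in> B) \<Longrightarrow> 1 \<in> B \<Longrightarrow> x \<in> B \<Longrightarrow> x ^ k \<in> B"
  by (induction k) auto

lemma Msum: "0 \<in> M \<Longrightarrow> (\<forall>x\<in>M. \<forall>y\<in>M. x + y \<in> M) \<Longrightarrow> (\<And>i. i \<in> S \<Longrightarrow> f i \<in> M) \<Longrightarrow> sum f S \<in> M"
  by (induction S rule: infinite_finite_induct) auto

lemma Mofnat: "0 \<in> M \<Longrightarrow> (\<forall>x\<in>M. \<forall>y\<in>M. x + y \<in> M) \<Longrightarrow> w \<in> M \<Longrightarrow> (of_nat k :: 'b::comm_ring_1) * w \<in> M"
  by (induction k) (auto simp: distrib_right)

lemma Tlem1: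
  fixes B M :: "'b::comm_ring_1 set"
  assumes Bm: "\<forall>x\<in>B. \<forall>y\<in>B. x * y \<in> B" and B1: "1 \<in> B" and M0: "0 \<in> M"
    and Madd: "\<forall>x\<in>M. \<forall>y\<in>M. x + y \<in> M"
    and x: "x \<in> B" and y: "y \<in> B" and qa: "\<forall>g\<in>B. x ^ a * g \<in> M" and qb: "\<forall>g\<in>B. y ^ b * g \<in> M"
    and a: "a \<ge> 1" and b: "b \<ge> 1"
  shows "\<forall>g\<in>B. (x + y) ^ (a + b - 1) * g \<in> M"
proof
  fix g assume g: "g \<in> B"
  let ?N = "a + b - 1"
  have "(x + y) ^ ?N * g = (\<Sum>k\<le>?N. of_nat (?N choose k) * x ^ k * y ^ (?N - k)) * g"
    by (simp only: binomial_ring)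
  also have "\<dots> = (\<Sum>k\<le>?N. of_nat (?N choose k) * x ^ k * y ^ (?N - k) * g)"
    by (rule sum_distrib_right)
  also have "\<dots> = (\<Sum>k\<le>?N. of_nat (?N choose k) * (x ^ k * y ^ (?N - k) * g))"
    by (simp only: mult.assoc)
  also have "\<dots> \<in> M"
  proof (rule Msum[OF M0 Madd], rule Mofnat[OF M0 Madd])
    fix k assume k: "k \<in> {..?N}"
    show "x ^ k * y ^ (?N - k) * g \<in> M"
    proof (cases "a \<le> k")
      case True
      have "x ^ k * y ^ (?N - k) * g = x ^ a * (x ^ (k - a) * y ^ (?N - k) * g)"
      proof -
        have "x ^ k = x ^ a * x ^ (k - a)" using True by (simp add: power_add[symmetric])
        then show ?thesis by (simp add: algebra_simps)
      qed
      moreover have "x ^ (k - a) * y ^ (?N - k) * g \<in> B"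
        using Bm Bpow[OF Bm B1 x] Bpow[OF Bm B1 y] g by auto
      ultimately show ?thesis using qa by simp
    next
      case False
      then have kb: "b \<le> ?N - k" using a b k by auto
      have "x ^ k * y ^ (?N - k) * g = y ^ b * (x ^ k * y ^ (?N - k - b) * g)"
      proof -
        have "?N - k = b + (?N - k - b)" using kb by simp
        then have "y ^ (?N - k) = y ^ b * y ^ (?N - k - b)" by (metis power_add)
        then show ?thesis by (simp add: algebra_simps)
      qed
      moreover have "x ^ k * y ^ (?N - k - b) * g \<in> B"
        using Bm Bpow[OF Bm B1 x] Bpow[OF Bm B1 y] g by auto
      ultimately show ?thesis using qb by simp
    qed
  qed
  finally show "(x + y) ^ ?N * g \<in> M" .
qed

lemma Tlem2:
  fixes B M :: "'b::comm_ring_1 set"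
  assumes Bm: "\<forall>x\<in>B. \<forall>y\<in>B. x * y \<in> B" and Ba: "\<forall>x\<in>B. \<forall>y\<in>B. x + y \<in> B" and B0: "0 \<in> B"
    and B1: "1 \<in> B" and M0: "0 \<in> M" and Madd: "\<forall>x\<in>M. \<forall>y\<in>M. x + y \<in> M"
    and p: "p \<ge> 1"
  shows "(\<forall>j<k. u j \<in> B \<and> (\<forall>g\<in>B. u j ^ p * g \<in> M)) \<Longrightarrow> \<forall>g\<in>B. (\<Sum>j<k. u j) ^ (k * (p - 1) + 1) * g \<in> M"
proof (induction k)
  case 0 then show ?case using M0 by simp
next
  case (Suc k)
  have s: "(\<Sum>j<k. u j) \<in> B" using Suc.prems
    by (induction k) (auto simp: B0 Ba)
  have e: "Suc k * (p - 1) + 1 = (k * (p - 1) + 1) + p - 1" using p by simp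
  show ?case unfolding e sum.lessThan_Suc
    by (rule Tlem1[OF Bm B1 M0 Madd s]) (use Suc p in auto)
qed

context charp
begin

lemma decomp:
  assumes cI: "\<forall>m. Poly_Mapping.lookup c m \<in> gen_ideal a n" and c: "c \<in> poly_ring n"
  shows "\<exists>cc. (\<forall>j<n. cc j \<in> poly_ring n) \<and> c = (\<Sum>j<n. const_poly (a j) * cc j)"
proof -
  have "\<forall>m. \<exists>r. Poly_Mapping.lookup c m = (\<Sum>j<n. r j * a j)" using cI unfolding gen_ideal_def by blast
  then obtain r where r: "\<And>m. Poly_Mapping.lookup c m = (\<Sum>j<n. r m j * a j)" by metis
  define cc where "cc j = (\<Sum>m\<in>Poly_Mapping.keys c. Poly_Mapping.single m (r m j))" for j
  have lc: "Poly_Mapping.lookup (cc j) k = (if k \<in> Poly_Mapping.keys c then r k j else 0)" for j k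
    unfolding cc_def lookup_sum lookup_single by (simp add: when_def)
  have "c = (\<Sum>j<n. const_poly (a j) * cc j)"
  proof (rule poly_mapping_eqI)
    fix k
    have "Poly_Mapping.lookup (\<Sum>j<n. const_poly (a j) * cc j) k = (\<Sum>j<n. a j * Poly_Mapping.lookup (cc j) k)"
      by (simp add: lookup_sum lookup_const_mult)
    also have "\<dots> = Poly_Mapping.lookup c k"
    proof (cases "k \<in> Poly_Mapping.keys c")
      case True then show ?thesis by (simp add: lc r mult.commute)
    next
      case False then show ?thesis by (simp add: lc in_keys_iff)
    qed
    finally show "Poly_Mapping.lookup c k = Poly_Mapping.lookup (\<Sum>j<n. const_poly (a j) * cc j) k" by simp
  qed
  moreover have "\<forall>j<n. cc j \<in> poly_ring n"
    using c unfolding cc_def pr_mem by (auto intro!: pr_sum[unfolded pr_mem] split: if_splits)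
  ultimately show ?thesis by blast
qed

end


context charp
begin

lemma Pset_sum: "(\<And>i. i \<in> S \<Longrightarrow> f i \<in> Pset) \<Longrightarrow> sum f S \<in> Pset"
  unfolding Pset_def using keys_sum[of f S] by blast

lemma fp_Pset: assumes pr: "prime p" shows "(f :: 'a mpoly) ^ p \<in> Pset"
proof -
  have "(of_nat p :: 'a mpoly) = Poly_Mapping.single 0 (of_nat p :: 'a)" by simp
  then have cp: "of_nat p = (0 :: 'a mpoly)" using charp by simp
  have "f ^ p = (\<Sum>m\<in>Poly_Mapping.keys f. Poly_Mapping.single m (Poly_Mapping.lookup f m)) ^ p"
    by (simp add: pm_decomp)
  also have "\<dots> = (\<Sum>m\<in>Poly_Mapping.keys f. Poly_Mapping.single m (Poly_Mapping.lookup f m) ^ p)"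
    by (rule frob_sum[OF pr cp])
  also have "\<dots> \<in> Pset"
  proof (rule Pset_sum)
    fix m
    obtain m' where m': "Poly_Mapping.single m (Poly_Mapping.lookup f m) ^ p = Poly_Mapping.single m' (Poly_Mapping.lookup f m ^ p)"
      "\<forall>j. Poly_Mapping.lookup m' j = p * Poly_Mapping.lookup m j" using single_pow by blast
    show "Poly_Mapping.single m (Poly_Mapping.lookup f m) ^ p \<in> Pset"
      unfolding m' Pset_def using m'(2) by auto
  qed
  finally show ?thesis .
qed

lemma gen_ideal_genI: "gen_ideal a k = genI {0} a k"
  unfolding gen_ideal_def genI_def by (auto simp: mult.commute)

lemma coeffI:
  assumes c: "c \<in> Pset" "c \<in> image_D n a" and rs: "regular_sequence n a"
  shows "Poly_Mapping.lookup c m \<in> gen_ideal a n"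
proof -
  obtain h where h: "c = (\<Sum>i<n. E i (h i))" using c(2) unfolding image_D_mem by blast
  have k: "(\<Prod>i<n. a i ^ (p - 1)) * Poly_Mapping.lookup c m \<in> genI {0} (\<lambda>i. a i ^ p) n"
    by (rule key_coeff[OF c(1) h])
  have r: "regL {0} a n" using rs unfolding regular_sequence_def regL_def nzd_def gen_ideal_genI
    by (auto simp: mult.commute)
  have "Poly_Mapping.lookup c m \<in> genI {0} a n"
    using claimG[OF ideal_zero r k] p2 by simp
  then show ?thesis by (simp add: gen_ideal_genI)
qed

end

theorem theorem2p2:
  fixes p n :: nat and a :: "nat \<Rightarrow> 'a::comm_ring_1"
  assumes "prime p"
    and "of_nat p = (0::'a)"
    and "regular_sequence n a"
  shows "mathieu_subspace (poly_ring n) (image_D n a)"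
proof -
  interpret charp p a using assms prime_ge_2_nat by unfold_locales auto
  have Bm: "\<forall>x\<in>poly_ring n. \<forall>y\<in>poly_ring n. x * y \<in> poly_ring n" by (auto simp: pr_mult)
  have Ba: "\<forall>x\<in>poly_ring n. \<forall>y\<in>poly_ring n. x + y \<in> poly_ring n" by (auto simp: pr_add)
  have Madd: "\<forall>x\<in>image_D n a. \<forall>y\<in>image_D n a. x + y \<in> image_D n a" by (auto simp: D_add)
  have p1: "p \<ge> 1" using p2 by simp
  show ?thesis unfolding mathieu_subspace_def
  proof (intro conjI ballI impI)
    show "image_D n a \<subseteq> poly_ring n" by (rule D_sub)
    show "0 \<in> image_D n a" by (rule D_0)
    show "\<And>x y. x \<in> image_D n a \<Longrightarrow> y \<in> image_D n a \<Longrightarrow> x + y \<in> image_D n a" by (rule D_add)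
    show "\<And>x. x \<in> image_D n a \<Longrightarrow> - x \<in> image_D n a" by (rule D_neg)
  next
    fix f g :: "'a mpoly" assume f: "f \<in> poly_ring n" and fm: "\<forall>m\<ge>1. f ^ m \<in> image_D n a" and g: "g \<in> poly_ring n"
    let ?c = "f ^ p"
    have cD: "?c \<in> image_D n a" using fm p1 by auto
    have cP: "?c \<in> Pset" by (rule fp_Pset[OF assms(1)])
    have cB: "?c \<in> poly_ring n" by (rule pr_power[OF f])
    have "\<forall>m. Poly_Mapping.lookup ?c m \<in> gen_ideal a n" using coeffI[OF cP cD assms(3)] by blast
    then obtain cc where cc: "\<forall>j<n. cc j \<in> poly_ring n" "?c = (\<Sum>j<n. const_poly (a j) * cc j)"
      using decomp[OF _ cB] by blast
    let ?u = "\<lambda>j. const_poly (a j) * cc j"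
    have u: "\<forall>j<n. ?u j \<in> poly_ring n \<and> (\<forall>g\<in>poly_ring n. ?u j ^ p * (g :: 'a mpoly) \<in> image_D n a)"
    proof (intro allI impI conjI ballI)
      fix j assume j: "j < n"
      show "?u j \<in> poly_ring n" using cc j by (simp add: pr_const_mult)
      fix g :: "'a mpoly" assume g: "g \<in> poly_ring n"
      have "?u j ^ p * g = const_poly (a j) ^ p * (cc j ^ p * g)" by (simp add: power_mult_distrib algebra_simps)
      moreover have "cc j ^ p * g \<in> poly_ring n" using cc j g by (simp add: pr_mult pr_power)
      ultimately show "?u j ^ p * g \<in> image_D n a" using D_ap j by simp
    qed
    let ?K = "n * (p - 1) + 1"
    have T: "\<forall>g\<in>poly_ring n. ?c ^ ?K * g \<in> image_D n a"
      using Tlem2[OF Bm Ba pr_0 pr_1 D_0 Madd p1 u] cc(2) by simp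
    show "\<exists>N. \<forall>m\<ge>N. f ^ m * g \<in> image_D n a"
    proof (intro exI allI impI)
      fix m assume m: "p * ?K \<le> m"
      have "m = p * ?K + (m - p * ?K)" using m by simp
      then have "f ^ m = f ^ (p * ?K) * f ^ (m - p * ?K)" by (metis power_add)
      then have "f ^ m * g = ?c ^ ?K * (f ^ (m - p * ?K) * g)"
        by (simp only: power_mult mult.assoc)
      moreover have "f ^ (m - p * ?K) * g \<in> poly_ring n" using f g by (simp add: pr_mult pr_power)
      ultimately show "f ^ m * g \<in> image_D n a" using T by simp
    qed
  qed
qed


end
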